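(* Let $G$ be a finite abelian group, let $\rho\in[2,\operatorname{diam}^+(G)]$, and let $A$ be a $\rho$-maximal subset of $G$. Then $\pi(A)=\pi(\langle A\rangle^+_\tau)$ for every $\tau\in[1,\rho-1]$.
   Context: Groups are written additively. For $A\subseteq G$ let $A_0:=A\cup\{0\}$ and $\langle A\rangle^+_\tau:=\tau A_0=\{a_1+\dots+a_\tau:a_i\in A_0\}$. $\operatorname{diam}^+_A(G):=\min\{\rho\in\mathbb{N}_0:\langle A\rangle^+_\rho=G\}$ ($\min\varnothing=\infty$); $\operatorname{diam}^+(G):=\max\{\operatorname{diam}^+_A(G):\langle A\rangle=G\}$. The period of $S\subseteq G$ is $\pi(S):=\{g\in G:S+g=S\}$. A subset $A\subseteq G$ is $\rho$-maximal if it is maximal under inclusion subject to $\operatorname{diam}^+_A(G)\ge\rho$, i.e. subject to $\langle A\rangle^+_{\rho-1}\neq G$. *)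

theory Defs
  imports Main "HOL-Library.Extended_Nat"
begin

text \<open>The ambient finite abelian group G is the type 'a :: {ab_group_add, finite}.\<close>

definition zero_ins :: "'a::ab_group_add set \<Rightarrow> 'a set" where
  "zero_ins A = insert 0 A"

definition sumset_plus :: "nat \<Rightarrow> 'a::ab_group_add set \<Rightarrow> 'a set" where
  "sumset_plus \<tau> A = {sum_list xs | xs. length xs = \<tau> \<and> set xs \<subseteq> zero_ins A}"

definition gen_subgroup :: "'a::ab_group_add set \<Rightarrow> 'a set" where
  "gen_subgroup A = \<Inter>{H. A \<subseteq> H \<and> 0 \<in> H \<and> (\<forall>x\<in>H. \<forall>y\<in>H. x + y \<in> H) \<and> (\<forall>x\<in>H. - x \<in> H)}"

definition diamA :: "'a::ab_group_add set \<Rightarrow> enat" where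
  "diamA A = (if \<exists>\<rho>. sumset_plus \<rho> A = UNIV
              then enat (LEAST \<rho>. sumset_plus \<rho> A = UNIV) else \<infinity>)"

definition diam_plus :: "'a::ab_group_add itself \<Rightarrow> enat" where
  "diam_plus _ = Sup {diamA (A::'a set) | A. gen_subgroup A = UNIV}"

definition period :: "'a::ab_group_add set \<Rightarrow> 'a set" where
  "period S = {g. (\<lambda>s. s + g) ` S = S}"

definition rho_maximal :: "nat \<Rightarrow> 'a::ab_group_add set \<Rightarrow> bool" where
  "rho_maximal \<rho> A \<longleftrightarrow> enat \<rho> \<le> diamA A \<and> (\<forall>B. A \<subset> B \<longrightarrow> \<not> enat \<rho> \<le> diamA B)"

end

theory Submission
  imports Defs
begin

lemma sumset_0: "sumset_plus 0 A = {0}"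
  unfolding sumset_plus_def by auto

lemma sumset_Suc:
  "sumset_plus (Suc n) A = {a + s | a s. a \<in> zero_ins A \<and> s \<in> sumset_plus n A}"
proof
  show "sumset_plus (Suc n) A \<subseteq> {a + s | a s. a \<in> zero_ins A \<and> s \<in> sumset_plus n A}"
  proof
    fix x assume "x \<in> sumset_plus (Suc n) A"
    then obtain xs where xs: "x = sum_list xs" "length xs = Suc n" "set xs \<subseteq> zero_ins A"
      unfolding sumset_plus_def by auto
    then obtain y ys where "xs = y # ys" by (cases xs) auto
    with xs show "x \<in> {a + s | a s. a \<in> zero_ins A \<and> s \<in> sumset_plus n A}"
      unfolding sumset_plus_def by auto
  qed
next
  show "{a + s | a s. a \<in> zero_ins A \<and> s \<in> sumset_plus n A} \<subseteq> sumset_plus (Suc n) A"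
  proof
    fix x assume "x \<in> {a + s | a s. a \<in> zero_ins A \<and> s \<in> sumset_plus n A}"
    then obtain a ys where "x = a + sum_list ys" "a \<in> zero_ins A" "length ys = n" "set ys \<subseteq> zero_ins A"
      unfolding sumset_plus_def by auto
    then show "x \<in> sumset_plus (Suc n) A"
      unfolding sumset_plus_def by (intro CollectI exI[of _ "a # ys"]) auto
  qed
qed

lemma sumset_mono_Suc: "sumset_plus n A \<subseteq> sumset_plus (Suc n) A"
proof
  fix x assume "x \<in> sumset_plus n A"
  then have "x = 0 + x" "(0::'a) \<in> zero_ins A" by (auto simp: zero_ins_def)
  with \<open>x \<in> sumset_plus n A\<close> show "x \<in> sumset_plus (Suc n) A"
    unfolding sumset_Suc by blast
qed

lemma sumset_mono: "n \<le> m \<Longrightarrow> sumset_plus n A \<subseteq> sumset_plus m A"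
  using lift_Suc_mono_le[of "\<lambda>n. sumset_plus n A"] sumset_mono_Suc by blast

lemma diam_iff:
  assumes "1 \<le> \<rho>"
  shows "enat \<rho> \<le> diamA A \<longleftrightarrow> sumset_plus (\<rho> - 1) A \<noteq> UNIV"
proof
  assume le: "enat \<rho> \<le> diamA A"
  show "sumset_plus (\<rho> - 1) A \<noteq> UNIV"
  proof
    assume eq: "sumset_plus (\<rho> - 1) A = UNIV"
    then have "diamA A = enat (LEAST r. sumset_plus r A = UNIV)"
      unfolding diamA_def by auto
    moreover have "(LEAST r. sumset_plus r A = UNIV) \<le> \<rho> - 1"
      using eq by (rule Least_le)
    ultimately show False using le assms by auto
  qed
next
  assume ne: "sumset_plus (\<rho> - 1) A \<noteq> UNIV"
  show "enat \<rho> \<le> diamA A"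
  proof (cases "\<exists>r. sumset_plus r A = UNIV")
    case False then show ?thesis unfolding diamA_def by simp
  next
    case True
    define l where "l = (LEAST r. sumset_plus r A = UNIV)"
    have l: "sumset_plus l A = UNIV" unfolding l_def using True by (rule LeastI_ex)
    have "\<rho> \<le> l"
    proof (rule ccontr)
      assume "\<not> \<rho> \<le> l"
      then have "l \<le> \<rho> - 1" by simp
      then have "sumset_plus l A \<subseteq> sumset_plus (\<rho> - 1) A" by (rule sumset_mono)
      with l ne show False by auto
    qed
    then show ?thesis unfolding diamA_def using True l_def by simp
  qed
qed

lemma period_iff:
  fixes S :: "'a::{ab_group_add, finite} set"
  shows "g \<in> period S \<longleftrightarrow> (\<forall>x\<in>S. x + g \<in> S)"
proof
  assume "g \<in> period S"
  then have "(\<lambda>s. s + g) ` S = S" unfolding period_def by simp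
  then show "\<forall>x\<in>S. x + g \<in> S" by blast
next
  assume h: "\<forall>x\<in>S. x + g \<in> S"
  have sub: "(\<lambda>s. s + g) ` S \<subseteq> S" using h by blast
  have "card ((\<lambda>s. s + g) ` S) = card S"
    by (rule card_image) (simp add: inj_on_def)
  then have "(\<lambda>s. s + g) ` S = S"
    using sub by (simp add: card_subset_eq)
  then show "g \<in> period S" unfolding period_def by simp
qed

lemma period_up:
  fixes A :: "'a::{ab_group_add, finite} set"
  assumes "g \<in> period (sumset_plus t A)" "t \<le> m"
  shows "g \<in> period (sumset_plus m A)"
  using assms(2)
proof (induction m)
  case 0 then show ?case using assms(1) by simp
next
  case (Suc m)
  show ?case
  proof (cases "t = Suc m")
    case True then show ?thesis using assms(1) by simp
  next
    case False
    then have IH: "g \<in> period (sumset_plus m A)" using Suc by simp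
    show ?thesis unfolding period_iff
    proof
      fix x assume "x \<in> sumset_plus (Suc m) A"
      then obtain a s where "x = a + s" "a \<in> zero_ins A" "s \<in> sumset_plus m A"
        unfolding sumset_Suc by blast
      moreover have "s + g \<in> sumset_plus m A" using IH \<open>s \<in> sumset_plus m A\<close> period_iff by blast
      ultimately show "x + g \<in> sumset_plus (Suc m) A"
      proof -
        have "x + g = a + (s + g)" using \<open>x = a + s\<close> by (simp add: add.assoc)
        then show ?thesis unfolding sumset_Suc using \<open>a \<in> zero_ins A\<close> \<open>s + g \<in> sumset_plus m A\<close> by blast
      qed
    qed
  qed
qed

theorem lemma5p1:
  fixes A :: "'a::{ab_group_add, finite} set" and \<rho> :: nat
  assumes "2 \<le> \<rho>" and "enat \<rho> \<le> diam_plus TYPE('a)"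
    and "rho_maximal \<rho> A"
  shows "\<forall>\<tau>\<in>{1..\<rho> - 1}. period A = period (sumset_plus \<tau> A)"
proof
  fix \<tau> assume tau: "\<tau> \<in> {1..\<rho> - 1}"
  have r1: "1 \<le> \<rho>" using assms(1) by simp
  have dA: "enat \<rho> \<le> diamA A" and maxi: "\<And>B. A \<subset> B \<Longrightarrow> \<not> enat \<rho> \<le> diamA B"
    using assms(3) unfolding rho_maximal_def by auto
  have zA: "0 \<in> A"
  proof (rule ccontr)
    assume "0 \<notin> A"
    then have "A \<subset> insert 0 A" by auto
    moreover have "diamA (insert 0 A) = diamA A"
      unfolding diamA_def sumset_plus_def zero_ins_def by simp
    ultimately show False using maxi dA by metis
  qed
  then have zi: "zero_ins A = A" unfolding zero_ins_def by auto
  define S where "S = sumset_plus (\<rho> - 1) A"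
  have SnU: "S \<noteq> UNIV" using diam_iff[OF r1, of A] dA unfolding S_def by blast
  obtain n where n: "\<tau> = Suc n" using tau by (cases \<tau>) auto
  show "period A = period (sumset_plus \<tau> A)"
  proof
    show "period A \<subseteq> period (sumset_plus \<tau> A)"
    proof
      fix g assume g: "g \<in> period A"
      show "g \<in> period (sumset_plus \<tau> A)" unfolding period_iff n
      proof
        fix x assume "x \<in> sumset_plus (Suc n) A"
        then obtain a s where "x = a + s" "a \<in> A" "s \<in> sumset_plus n A"
          unfolding sumset_Suc zi by blast
        moreover have "a + g \<in> A" using g \<open>a \<in> A\<close> period_iff by blast
        ultimately show "x + g \<in> sumset_plus (Suc n) A"
        proof -
          have "x + g = (a + g) + s" using \<open>x = a + s\<close> by (simp add: ac_simps)
          then show ?thesis unfolding sumset_Suc zi using \<open>a + g \<in> A\<close> \<open>s \<in> sumset_plus n A\<close> by blast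
        qed
      qed
    qed
  next
    show "period (sumset_plus \<tau> A) \<subseteq> period A"
    proof
      fix g assume g: "g \<in> period (sumset_plus \<tau> A)"
      have gS: "g \<in> period S" unfolding S_def using period_up[OF g] tau by simp
      define H where "H = {h. \<forall>x\<in>S. x + h \<in> S}"
      have gH: "g \<in> H" using gS period_iff unfolding H_def by blast
      have H0: "0 \<in> H" unfolding H_def by simp
      have Hadd: "\<And>h k. h \<in> H \<Longrightarrow> k \<in> H \<Longrightarrow> h + k \<in> H"
      proof -
        fix h k assume "h \<in> H" "k \<in> H"
        then have "\<forall>x\<in>S. x + h \<in> S" "\<forall>x\<in>S. x + k \<in> S" unfolding H_def by auto
        then have "\<forall>x\<in>S. x + (h + k) \<in> S" by (simp add: add.assoc[symmetric])
        then show "h + k \<in> H" unfolding H_def by simp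
      qed
      define B where "B = A \<union> (\<lambda>a. a + g) ` A"
      have zB: "zero_ins B = B" using zA unfolding B_def zero_ins_def by auto
      have claim: "sumset_plus m B \<subseteq> {y + h | y h. y \<in> sumset_plus m A \<and> h \<in> H}" for m
      proof (induction m)
        case 0 then show ?case using H0 by (auto simp: sumset_0)
      next
        case (Suc m)
        show ?case
        proof
          fix x assume "x \<in> sumset_plus (Suc m) B"
          then obtain b s where bs: "x = b + s" "b \<in> B" "s \<in> sumset_plus m B"
            unfolding sumset_Suc zB by blast
          then obtain y h where yh: "s = y + h" "y \<in> sumset_plus m A" "h \<in> H" using Suc by blast
          from bs(2) obtain a k where ak: "a \<in> A" "k \<in> H" "b = a + k"
            unfolding B_def using H0 gH by (auto simp: add.commute)
          have "x = (a + y) + (k + h)" using bs yh ak by (simp add: ac_simps)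
          moreover have "a + y \<in> sumset_plus (Suc m) A" unfolding sumset_Suc zi using ak yh by blast
          moreover have "k + h \<in> H" using Hadd ak yh by blast
          ultimately show "x \<in> {y + h | y h. y \<in> sumset_plus (Suc m) A \<and> h \<in> H}" by blast
        qed
      qed
      have "sumset_plus (\<rho> - 1) B \<subseteq> S"
      proof
        fix x assume "x \<in> sumset_plus (\<rho> - 1) B"
        then obtain y h where "x = y + h" "y \<in> S" "h \<in> H" using claim unfolding S_def by blast
        then show "x \<in> S" unfolding H_def by blast
      qed
      then have "sumset_plus (\<rho> - 1) B \<noteq> UNIV" using SnU by auto
      then have "enat \<rho> \<le> diamA B" using diam_iff[OF r1, of B] by blast
      then have "\<not> A \<subset> B" using maxi by blast
      moreover have "A \<subseteq> B" unfolding B_def by auto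
      ultimately have "B = A" by auto
      then have "\<forall>a\<in>A. a + g \<in> A" unfolding B_def by auto
      then show "g \<in> period A" using period_iff by blast
    qed
  qed
qed

end
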